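(* Let $(X,d)$, $\mathcal{R}$, $p$, $T$, $Y$ and $\lambda$ satisfy all hypotheses (1)–(4) of the following fixed point theorem: $(X,d)$ is a metric space, $\mathcal{R}$ a binary relation on $X$, $p$ a $w$-distance with respect to $\mathcal{R}$, $T:X\to X$, and (1) there is $Y\subseteq X$ with $T(X)\subseteq Y$ and $(Y,d)$ $\mathcal{R}$-complete; (2) $X(T,\mathcal{R})\ne\emptyset$ and $\mathcal{R}$ is $T$-closed; (3) $T$ is $\mathcal{R}$-continuous or $\mathcal{R}|_Y$ is $d$-self-closed; (4) there is $\lambda\in[0,1)$ with $p(Tx,Ty)\le\lambda p(x,y)$ whenever $(x,y)\in\mathcal{R}$. Suppose in addition that at least one of the following holds: (a) for every $x,y\in T(X)$ there exists $z\in T(X)$ such that $(z,x)\in\mathcal{R}$ and $(z,y)\in\mathcal{R}$; (b) $\mathcal{R}|_{T(X)}$ is complete, i.e. for all $x,y\in T(X)$, $(x,y)\in\mathcal{R}$ or $(y,x)\in\mathcal{R}$. Then $T$ has a unique fixed point.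
   Context: A sequence $(x_n)$ is $\mathcal{R}$-preserving if $(x_n,x_{n+1})\in\mathcal{R}$ for all $n\ge0$. $(Y,d)$ is $\mathcal{R}$-complete if every $\mathcal{R}$-preserving Cauchy sequence in $Y$ converges in $Y$. $X(T,\mathcal{R})=\{x\in X:(x,Tx)\in\mathcal{R}\}$. $\mathcal{R}$ is $T$-closed if $(x,y)\in\mathcal{R}\Rightarrow(Tx,Ty)\in\mathcal{R}$. $T$ is $\mathcal{R}$-continuous if $Tx_n\to Tx$ for every $\mathcal{R}$-preserving sequence $x_n\to x$. $\mathcal{R}|_Y=\mathcal{R}\cap(Y\times Y)$ is $d$-self-closed if every $\mathcal{R}|_Y$-preserving sequence $x_n\to x$ has a subsequence with $(x_{n_k},x)\in\mathcal{R}|_Y$ for all $k$. A function $g$ is $\mathcal{R}$-lower semi-continuous at $x$ if $\liminf_n g(x_n)\ge g(x)$ for every $\mathcal{R}$-preserving sequence $x_n\to x$. A $w$-distance with respect to $\mathcal{R}$ is $p:X\times X\to[0,\infty)$ with: (w1') $p(x,z)\le p(x,y)+p(y,z)$; (w2') each $p(x,\cdot)$ is $\mathcal{R}$-lower semi-continuous; (w3') for every $\epsilon>0$ there is $\delta>0$ such that $p(z,x)\le\delta$ and $p(z,y)\le\delta$ imply $d(x,y)\le\epsilon$. *)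

theory Defs
  imports "HOL-Analysis.Analysis"
begin

definition R_preserving :: "('a \<times> 'a) set \<Rightarrow> (nat \<Rightarrow> 'a) \<Rightarrow> bool" where
  "R_preserving R x \<longleftrightarrow> (\<forall>n. (x n, x (Suc n)) \<in> R)"

definition restrict_rel :: "('a \<times> 'a) set \<Rightarrow> 'a set \<Rightarrow> ('a \<times> 'a) set" where
  "restrict_rel R Y = R \<inter> (Y \<times> Y)"

definition R_complete :: "'a::metric_space set \<Rightarrow> ('a \<times> 'a) set \<Rightarrow> bool" where
  "R_complete Y R \<longleftrightarrow>
     (\<forall>x. (\<forall>n. x n \<in> Y) \<longrightarrow> R_preserving R x \<longrightarrow> Cauchy x \<longrightarrow> (\<exists>l\<in>Y. x \<longlonglongrightarrow> l))"

definition fix_set_rel :: "('a \<Rightarrow> 'a) \<Rightarrow> ('a \<times> 'a) set \<Rightarrow> 'a set" where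
  "fix_set_rel T R = {x. (x, T x) \<in> R}"

definition T_closed :: "('a \<times> 'a) set \<Rightarrow> ('a \<Rightarrow> 'a) \<Rightarrow> bool" where
  "T_closed R T \<longleftrightarrow> (\<forall>x y. (x, y) \<in> R \<longrightarrow> (T x, T y) \<in> R)"

definition R_continuous :: "('a \<times> 'a) set \<Rightarrow> ('a::metric_space \<Rightarrow> 'a) \<Rightarrow> bool" where
  "R_continuous R T \<longleftrightarrow>
     (\<forall>x l. R_preserving R x \<longrightarrow> x \<longlonglongrightarrow> l \<longrightarrow> (\<lambda>n. T (x n)) \<longlonglongrightarrow> T l)"

definition d_self_closed :: "('a::metric_space \<times> 'a) set \<Rightarrow> bool" where
  "d_self_closed S \<longleftrightarrow>
     (\<forall>x l. R_preserving S x \<longrightarrow> x \<longlonglongrightarrow> l \<longrightarrow>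
        (\<exists>r::nat\<Rightarrow>nat. strict_mono r \<and> (\<forall>k. (x (r k), l) \<in> S)))"

definition R_lsc :: "('a \<times> 'a) set \<Rightarrow> ('a::metric_space \<Rightarrow> real) \<Rightarrow> 'a \<Rightarrow> bool" where
  "R_lsc R g l \<longleftrightarrow>
     (\<forall>x. R_preserving R x \<longrightarrow> x \<longlonglongrightarrow> l \<longrightarrow>
        ereal (g l) \<le> liminf (\<lambda>n. ereal (g (x n))))"

definition w_distance :: "('a \<times> 'a) set \<Rightarrow> ('a::metric_space \<Rightarrow> 'a \<Rightarrow> real) \<Rightarrow> bool" where
  "w_distance R p \<longleftrightarrow>
     (\<forall>x y. 0 \<le> p x y) \<and>
     (\<forall>x y z. p x z \<le> p x y + p y z) \<and>
     (\<forall>x l. R_lsc R (p x) l) \<and>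
     (\<forall>\<epsilon>>0. \<exists>\<delta>>0. \<forall>x y z. p z x \<le> \<delta> \<longrightarrow> p z y \<le> \<delta> \<longrightarrow> dist x y \<le> \<epsilon>)"

end

theory Submission
  imports Defs
begin

lemma w3_eq:
  assumes wd: "w_distance R p" and h: "\<And>\<delta>. \<delta> > 0 \<Longrightarrow> \<exists>z. p z x \<le> \<delta> \<and> p z y \<le> \<delta>"
  shows "x = y"
proof (rule ccontr)
  assume "x \<noteq> y"
  then have e: "dist x y / 2 > 0" by simp
  have "\<forall>\<epsilon>>0. \<exists>\<delta>>0. \<forall>a b c. p c a \<le> \<delta> \<longrightarrow> p c b \<le> \<delta> \<longrightarrow> dist a b \<le> \<epsilon>"
    using wd unfolding w_distance_def by blast
  from this[rule_format, OF e] obtain \<delta> where d: "\<delta> > 0" "\<forall>a b c. p c a \<le> \<delta> \<longrightarrow> p c b \<le> \<delta> \<longrightarrow> dist a b \<le> dist x y / 2"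
    by blast
  from h[OF d(1)] obtain z where "p z x \<le> \<delta>" "p z y \<le> \<delta>" by blast
  with d(2) have "dist x y \<le> dist x y / 2" by blast
  with e show False by simp
qed

lemma pow_ev:
  fixes lam C :: real
  assumes "0 \<le> lam" "lam < 1" "\<delta> > 0"
  shows "\<exists>N. \<forall>n\<ge>N. lam ^ n * C \<le> \<delta>"
proof -
  have "(\<lambda>n. lam ^ n) \<longlonglongrightarrow> 0" using assms by (intro LIMSEQ_power_zero) simp
  then have "(\<lambda>n. lam ^ n * C) \<longlonglongrightarrow> 0" by (rule tendsto_mult_left_zero)
  then have "eventually (\<lambda>n. lam ^ n * C < \<delta>) sequentially"
    using assms(3) by (rule order_tendstoD(2))
  then show ?thesis unfolding eventually_sequentially by (meson less_imp_le)
qed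

theorem theorem2p2:
  fixes R :: "('a::metric_space \<times> 'a) set"
    and p :: "'a \<Rightarrow> 'a \<Rightarrow> real"
    and T :: "'a \<Rightarrow> 'a"
    and Y :: "'a set"
    and lam :: real
  assumes wd: "w_distance R p"
    and h1: "range T \<subseteq> Y" "R_complete Y R"
    and h2: "fix_set_rel T R \<noteq> {}" "T_closed R T"
    and h3: "R_continuous R T \<or> d_self_closed (restrict_rel R Y)"
    and h4: "0 \<le> lam" "lam < 1" "\<And>x y. (x, y) \<in> R \<Longrightarrow> p (T x) (T y) \<le> lam * p x y"
    and hab: "(\<forall>x\<in>range T. \<forall>y\<in>range T. \<exists>z\<in>range T. (z, x) \<in> R \<and> (z, y) \<in> R)
              \<or> (\<forall>x\<in>range T. \<forall>y\<in>range T. (x, y) \<in> R \<or> (y, x) \<in> R)"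
  shows "\<exists>!x. T x = x"
proof -
  have pnn: "\<And>x y. 0 \<le> p x y" and tri: "\<And>x y z. p x z \<le> p x y + p y z"
    and lsc: "\<And>x l. R_lsc R (p x) l"
    using wd unfolding w_distance_def by auto
  have TC: "\<And>x y. (x, y) \<in> R \<Longrightarrow> (T x, T y) \<in> R" using h2(2) unfolding T_closed_def by blast
  have uniq: "u = v" if "(z, u) \<in> R" "(z, v) \<in> R" "T u = u" "T v = v" for z u v
  proof -
    have dec: "(((T ^^ n) z, w) \<in> R \<and> p ((T ^^ n) z) w \<le> lam ^ n * p z w)"
      if "(z, w) \<in> R" "T w = w" for w n
    proof (induction n)
      case 0 then show ?case using that by simp
    next
      case (Suc n)
      then have r: "((T ^^ n) z, w) \<in> R" by blast
      have "(T ((T ^^ n) z), T w) \<in> R" using TC[OF r] .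
      moreover have "p (T ((T ^^ n) z)) (T w) \<le> lam * p ((T ^^ n) z) w" using h4(3)[OF r] .
      moreover have "lam * p ((T ^^ n) z) w \<le> lam * (lam ^ n * p z w)"
        using Suc h4(1) by (intro mult_left_mono) auto
      ultimately show ?case using that(2) by simp
    qed
    show ?thesis
    proof (rule w3_eq[OF wd])
      fix \<delta> :: real assume "\<delta> > 0"
      obtain N where N: "\<forall>n\<ge>N. lam ^ n * (p z u + p z v) \<le> \<delta>"
        using pow_ev[OF h4(1,2) \<open>\<delta> > 0\<close>] by blast
      have a: "p ((T ^^ N) z) u \<le> lam ^ N * p z u" using dec[OF that(1,3)] by blast
      have b: "p ((T ^^ N) z) v \<le> lam ^ N * p z v" using dec[OF that(2,4)] by blast
      have l0: "0 \<le> lam ^ N" using h4(1) by simp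
      have "lam ^ N * p z u \<le> lam ^ N * (p z u + p z v)" "lam ^ N * p z v \<le> lam ^ N * (p z u + p z v)"
        using l0 pnn by (auto intro: mult_left_mono)
      then have "p ((T ^^ N) z) u \<le> \<delta> \<and> p ((T ^^ N) z) v \<le> \<delta>" using a b N by force
      then show "\<exists>w. p w u \<le> \<delta> \<and> p w v \<le> \<delta>" by blast
    qed
  qed
  obtain x0 where x0: "(x0, T x0) \<in> R" using h2(1) unfolding fix_set_rel_def by blast
  define x where "x n = (T ^^ n) x0" for n
  have xS: "x (Suc n) = T (x n)" for n unfolding x_def by simp
  have xR: "(x n, x (Suc n)) \<in> R" for n
    by (induction n) (use x0 TC xS in \<open>auto simp: x_def\<close>)
  define a where "a = p x0 (x 1)"
  define C where "C = a / (1 - lam)"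
  have a0: "0 \<le> a" unfolding a_def using pnn by simp
  have C0: "0 \<le> C" unfolding C_def using a0 h4(2) by simp
  have aC: "a = C * (1 - lam)" unfolding C_def using h4(2) by simp
  have step: "p (x n) (x (Suc n)) \<le> lam ^ n * a" for n
  proof (induction n)
    case 0 then show ?case by (simp add: a_def x_def)
  next
    case (Suc n)
    have "p (x (Suc n)) (x (Suc (Suc n))) \<le> lam * p (x n) (x (Suc n))"
      using h4(3)[OF xR[of n]] by (simp only: xS)
    also have "\<dots> \<le> lam * (lam ^ n * a)" using Suc h4(1) by (intro mult_left_mono)
    finally show ?case by simp
  qed
  have far: "p (x n) (x (n + Suc k)) \<le> lam ^ n * C * (1 - lam ^ Suc k)" for n k
  proof (induction k)
    case 0 then show ?case using step[of n] aC by (simp add: algebra_simps)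
  next
    case (Suc k)
    have "p (x n) (x (n + Suc (Suc k))) \<le> p (x n) (x (n + Suc k)) + p (x (n + Suc k)) (x (Suc (n + Suc k)))"
      using tri by simp
    also have "\<dots> \<le> lam ^ n * C * (1 - lam ^ Suc k) + lam ^ (n + Suc k) * a"
      using Suc step[of "n + Suc k"] by linarith
    also have "\<dots> = lam ^ n * C * (1 - lam ^ Suc (Suc k))"
      unfolding aC by (simp add: algebra_simps power_add)
    finally show ?case .
  qed
  define B where "B n = lam ^ n * C" for n
  have farB: "p (x n) (x m) \<le> B n" if "n < m" for n m
  proof -
    define k where "k = m - n - 1"
    have m: "m = n + Suc k" using that unfolding k_def by simp
    have "lam ^ n * C * (1 - lam ^ Suc k) \<le> lam ^ n * C * 1"
      using h4(1) C0 by (intro mult_left_mono) auto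
    then show ?thesis using far[of n k] m unfolding B_def by simp
  qed
  define y where "y n = x (Suc n)" for n
  have yY: "\<forall>n. y n \<in> Y" using h1(1) unfolding y_def xS by auto
  have yR: "R_preserving R y" unfolding R_preserving_def y_def using xR by simp
  have yC: "Cauchy y"
    unfolding Cauchy_def
  proof (intro allI impI)
    fix e :: real assume e: "e > 0"
    then have "e / 2 > 0" by simp
    with wd obtain \<delta> where d: "\<delta> > 0" "\<forall>x y z. p z x \<le> \<delta> \<longrightarrow> p z y \<le> \<delta> \<longrightarrow> dist x y \<le> e / 2"
      unfolding w_distance_def by blast
    obtain N where N: "\<forall>n\<ge>N. B n \<le> \<delta>" using pow_ev[OF h4(1,2) d(1)] unfolding B_def by blast
    show "\<exists>M. \<forall>m\<ge>M. \<forall>n\<ge>M. dist (y m) (y n) < e"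
    proof (intro exI allI impI)
      fix m n assume "N \<le> m" "N \<le> n"
      then have "p (x N) (y m) \<le> \<delta>" "p (x N) (y n) \<le> \<delta>"
        using farB[of N "Suc m"] farB[of N "Suc n"] N unfolding y_def by force+
      then have "dist (y m) (y n) \<le> e / 2" using d(2) by blast
      then show "dist (y m) (y n) < e" using e by simp
    qed
  qed
  obtain u where u: "u \<in> Y" "y \<longlonglongrightarrow> u"
    using h1(2) yY yR yC unfolding R_complete_def by blast
  have fixu: "T u = u"
    using h3
  proof
    assume "R_continuous R T"
    then have "(\<lambda>n. T (y n)) \<longlonglongrightarrow> T u" using yR u(2) unfolding R_continuous_def by blast
    moreover have "(\<lambda>n. T (y n)) = (\<lambda>n. y (Suc n))" unfolding y_def xS by simp
    moreover have "(\<lambda>n. y (Suc n)) \<longlonglongrightarrow> u" using u(2) by (rule LIMSEQ_Suc)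
    ultimately show "T u = u" using LIMSEQ_unique by metis
  next
    assume sc: "d_self_closed (restrict_rel R Y)"
    have "R_preserving (restrict_rel R Y) y"
      using yR yY unfolding R_preserving_def restrict_rel_def by auto
    then obtain r :: "nat \<Rightarrow> nat" where r: "strict_mono r" "\<forall>k. (y (r k), u) \<in> restrict_rel R Y"
      using sc u(2) unfolding d_self_closed_def by blast
    have pu: "p (x n) u \<le> B n" for n
    proof -
      have "ereal (p (x n) u) \<le> liminf (\<lambda>m. ereal (p (x n) (y m)))"
        using lsc[of "x n" u] yR u(2) unfolding R_lsc_def by blast
      also have "\<dots> \<le> liminf (\<lambda>m. ereal (B n))"
      proof (rule Liminf_mono)
        show "\<forall>\<^sub>F m in sequentially. ereal (p (x n) (y m)) \<le> ereal (B n)"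
          unfolding eventually_sequentially y_def using farB by (intro exI[of _ n]) auto
      qed
      also have "\<dots> = ereal (B n)" by (simp add: Liminf_const)
      finally show ?thesis by simp
    qed
    show "T u = u"
    proof (rule w3_eq[OF wd])
      fix \<delta> :: real assume "\<delta> > 0"
      obtain N where N: "\<forall>n\<ge>N. B n \<le> \<delta>" using pow_ev[OF h4(1,2) \<open>\<delta> > 0\<close>] unfolding B_def by blast
      define n where "n = r N"
      have nN: "N \<le> n" unfolding n_def using seq_suble[OF r(1)] by simp
      have rR: "(y n, u) \<in> R" using r(2) unfolding n_def restrict_rel_def by blast
      have "p (x (Suc (Suc n))) (T u) = p (T (y n)) (T u)" unfolding y_def xS by simp
      also have "\<dots> \<le> lam * p (y n) u" using h4(3)[OF rR] .
      also have "\<dots> \<le> lam * B (Suc n)" using pu[of "Suc n"] h4(1) unfolding y_def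
        by (intro mult_left_mono) auto
      also have "\<dots> = B (Suc (Suc n))" unfolding B_def by simp
      finally have A0: "p (x (Suc (Suc n))) (T u) \<le> B (Suc (Suc n))" .
      have "B (Suc (Suc n)) \<le> \<delta>" using N nN by simp
      with A0 have A: "p (x (Suc (Suc n))) (T u) \<le> \<delta>" by linarith
      have "p (x (Suc (Suc n))) u \<le> \<delta>" using pu[of "Suc (Suc n)"] \<open>B (Suc (Suc n)) \<le> \<delta>\<close> by linarith
      with A show "\<exists>z. p z (T u) \<le> \<delta> \<and> p z u \<le> \<delta>" by blast
    qed
  qed
  show ?thesis
  proof (rule ex1I[of _ u])
    show "T u = u" by (rule fixu)
  next
    fix v assume v: "T v = v"
    have ur: "u \<in> range T" "v \<in> range T" using fixu v by (metis rangeI)+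
    from hab show "v = u"
    proof
      assume "\<forall>x\<in>range T. \<forall>y\<in>range T. \<exists>z\<in>range T. (z, x) \<in> R \<and> (z, y) \<in> R"
      then obtain z where "(z, v) \<in> R" "(z, u) \<in> R" using ur by blast
      then show "v = u" using uniq v fixu by blast
    next
      assume tot: "\<forall>x\<in>range T. \<forall>y\<in>range T. (x, y) \<in> R \<or> (y, x) \<in> R"
      have uu: "(u, u) \<in> R" "(v, v) \<in> R" using tot ur by blast+
      from tot ur have "(u, v) \<in> R \<or> (v, u) \<in> R" by blast
      then show "v = u" using uniq[OF uu(1), of v] uniq[OF _ uu(2), of u] v fixu by blast
    qed
  qed
qed

end
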